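(* Fix $c\in\mathcal{C}'$ with $\mathcal{S}(c)\setminus\{c\}\neq\emptyset$ and arbitrary values of all messages, and let $b_t$, $t\in\mathcal{T}$, be the corresponding beliefs. Let $\boldsymbol\lambda_{c,\mathcal{S}(c)}$ be the current block of messages out of $c$ and $\boldsymbol\lambda^*_{c,\mathcal{S}(c)}$ the updated block. Then the dual decrease $d(c)=g_c(\boldsymbol\lambda_{c,\mathcal{S}(c)})-g_c(\boldsymbol\lambda^*_{c,\mathcal{S}(c)})$ satisfies $$d(c)=\max_{\mathbf{x}_c}b_c(\mathbf{x}_c)+\sum_{s\in\mathcal{S}(c)\setminus\{c\}}\max_{\mathbf{x}_s}b_s(\mathbf{x}_s)-\max_{\mathbf{x}_c}\Big[b_c(\mathbf{x}_c)+\sum_{s\in\mathcal{S}(c)\setminus\{c\}}b_s(\mathbf{x}_s)\Big]\geqslant 0.$$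
   Context: Let $\mathcal{V}=\{1,\dots,n\}$; each variable $x_i$ takes values in a finite set, and for $s\subseteq\mathcal{V}$ write $\mathbf{x}_s=(x_i)_{i\in s}$. Let $\mathcal{C}$ be a collection of subsets of $\mathcal{V}$ with real potentials $\theta_c(\mathbf{x}_c)$, $c\in\mathcal{C}$. Let $\mathcal{C}'$ be a collection of subsets of $\mathcal{V}$ and for each $c\in\mathcal{C}'$ let $\mathcal{S}(c)$ be a collection of subsets of $c$ (possibly containing $c$), with $\mathcal{C}'\cup\bigcup_{c\in\mathcal{C}'}\mathcal{S}(c)\supseteq\mathcal{C}$; put $\mathcal{T}=\mathcal{C}'\cup\bigcup_{c\in\mathcal{C}'}\mathcal{S}(c)$. Messages are reals $\lambda_{c\to s}(\mathbf{x}_s)$, $c\in\mathcal{C}'$, $s\in\mathcal{S}(c)\setminus\{c\}$. For $t\in\mathcal{T}$: $\hat\theta_t=\mathbb{1}(t\in\mathcal{C})\theta_t$; $\gamma_t(\mathbf{x}_t)=\mathbb{1}(t\in\mathcal{C}')\sum_{\hat s\in\mathcal{S}(t)\setminus\{t\}}\lambda_{t\to\hat s}(\mathbf{x}_{\hat s})$; $\lambda_t(\mathbf{x}_t)=\sum_{c'\in\mathcal{C}':\,t\in\mathcal{S}(c')\setminus\{c'\}}\lambda_{c'\to t}(\mathbf{x}_t)$; beliefs $b_t=\hat\theta_t+\lambda_t-\gamma_t$. For $s\in\mathcal{S}(c)\setminus\{c\}$, $\lambda_s^{-c}(\mathbf{x}_s)=\sum_{\hat c\in\mathcal{C}':\,\hat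 c\ne c,\ s\in\mathcal{S}(\hat c)\setminus\{\hat c\}}\lambda_{\hat c\to s}(\mathbf{x}_s)$. With all messages not of the form $\lambda_{c\to s}$ held fixed, $g_c$ is the function of the block $\boldsymbol\lambda_{c,\mathcal{S}(c)}=(\lambda_{c\to s}(\mathbf{x}_s))_{s\in\mathcal{S}(c)\setminus\{c\}}$ given by $g_c=\max_{\mathbf{x}_c}[\hat\theta_c(\mathbf{x}_c)-\sum_{s\in\mathcal{S}(c)\setminus\{c\}}\lambda_{c\to s}(\mathbf{x}_s)+\lambda_c(\mathbf{x}_c)]+\sum_{s\in\mathcal{S}(c)\setminus\{c\}}\max_{\mathbf{x}_s}[\hat\theta_s(\mathbf{x}_s)-\gamma_s(\mathbf{x}_s)+\lambda^{-c}_s(\mathbf{x}_s)+\lambda_{c\to s}(\mathbf{x}_s)]$. The updated block is $\lambda^*_{c\to s}(\mathbf{x}_s)=-\hat\theta_s(\mathbf{x}_s)+\gamma_s(\mathbf{x}_s)-\lambda_s^{-c}(\mathbf{x}_s)+\frac{1}{|\mathcal{S}(c)\setminus\{c\}|}\max_{\mathbf{x}_{c\setminus s}}[\hat\theta_c(\mathbf{x}_c)+\lambda_c(\mathbf{x}_c)+\sum_{\hat s\in\mathcal{S}(c)\setminus\{c\}}(\hat\theta_{\hat s}-\gamma_{\hat s}+\lambda^{-c}_{\hat s})(\mathbf{x}_{\hat s})]$. *)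

theory Defs
  imports Complex_Main "HOL-Library.FuncSet"
begin

(* Configurations (joint assignments) x_s of the variables in s:
   functions defined on s with x i \<in> D i, undefined outside s.
   x_s of a configuration x_c (s \<subseteq> c) is  restrict x s. *)
definition cfg :: "(nat \<Rightarrow> 'v set) \<Rightarrow> nat set \<Rightarrow> (nat \<Rightarrow> 'v) set" where
  "cfg D s = PiE s D"

definition theta_hat :: "nat set set \<Rightarrow> (nat set \<Rightarrow> (nat \<Rightarrow> 'v) \<Rightarrow> real)
    \<Rightarrow> nat set \<Rightarrow> (nat \<Rightarrow> 'v) \<Rightarrow> real" where
  "theta_hat C \<theta> t x = (if t \<in> C then \<theta> t x else 0)"

(* gamma_t(x_t) = 1(t \<in> C') \<Sum>_{s \<in> S(t)\{t}} lambda_{t\<rightarrow>s}(x_s);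
   messages: lam c s x_s = lambda_{c\<rightarrow>s}(x_s) *)
definition gamma :: "nat set set \<Rightarrow> (nat set \<Rightarrow> nat set set)
    \<Rightarrow> (nat set \<Rightarrow> nat set \<Rightarrow> (nat \<Rightarrow> 'v) \<Rightarrow> real) \<Rightarrow> nat set \<Rightarrow> (nat \<Rightarrow> 'v) \<Rightarrow> real" where
  "gamma C' S lam t x = (if t \<in> C' then (\<Sum>s\<in>S t - {t}. lam t s (restrict x s)) else 0)"

definition lam_in :: "nat set set \<Rightarrow> (nat set \<Rightarrow> nat set set)
    \<Rightarrow> (nat set \<Rightarrow> nat set \<Rightarrow> (nat \<Rightarrow> 'v) \<Rightarrow> real) \<Rightarrow> nat set \<Rightarrow> (nat \<Rightarrow> 'v) \<Rightarrow> real" where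
  "lam_in C' S lam t x = (\<Sum>c'\<in>{c'\<in>C'. t \<in> S c' - {c'}}. lam c' t x)"

definition lam_minus :: "nat set set \<Rightarrow> (nat set \<Rightarrow> nat set set)
    \<Rightarrow> (nat set \<Rightarrow> nat set \<Rightarrow> (nat \<Rightarrow> 'v) \<Rightarrow> real) \<Rightarrow> nat set \<Rightarrow> nat set \<Rightarrow> (nat \<Rightarrow> 'v) \<Rightarrow> real" where
  "lam_minus C' S lam c s x = (\<Sum>c'\<in>{c'\<in>C'. c' \<noteq> c \<and> s \<in> S c' - {c'}}. lam c' s x)"

definition belief :: "nat set set \<Rightarrow> nat set set \<Rightarrow> (nat set \<Rightarrow> nat set set)
    \<Rightarrow> (nat set \<Rightarrow> (nat \<Rightarrow> 'v) \<Rightarrow> real)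
    \<Rightarrow> (nat set \<Rightarrow> nat set \<Rightarrow> (nat \<Rightarrow> 'v) \<Rightarrow> real) \<Rightarrow> nat set \<Rightarrow> (nat \<Rightarrow> 'v) \<Rightarrow> real" where
  "belief C C' S \<theta> lam t x = theta_hat C \<theta> t x + lam_in C' S lam t x - gamma C' S lam t x"

(* g_c as a function of the block blk s x_s = lambda_{c\<rightarrow>s}(x_s), s \<in> S(c)\{c};
   all other messages are taken from lam (held fixed). *)
definition g_block :: "nat set set \<Rightarrow> nat set set \<Rightarrow> (nat set \<Rightarrow> nat set set)
    \<Rightarrow> (nat set \<Rightarrow> (nat \<Rightarrow> 'v) \<Rightarrow> real) \<Rightarrow> (nat \<Rightarrow> 'v set)
    \<Rightarrow> (nat set \<Rightarrow> nat set \<Rightarrow> (nat \<Rightarrow> 'v) \<Rightarrow> real) \<Rightarrow> nat set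
    \<Rightarrow> (nat set \<Rightarrow> (nat \<Rightarrow> 'v) \<Rightarrow> real) \<Rightarrow> real" where
  "g_block C C' S \<theta> D lam c blk =
     Max ((\<lambda>x. theta_hat C \<theta> c x - (\<Sum>s\<in>S c - {c}. blk s (restrict x s)) + lam_in C' S lam c x)
            ` cfg D c)
     + (\<Sum>s\<in>S c - {c}. Max ((\<lambda>x. theta_hat C \<theta> s x - gamma C' S lam s x
                                    + lam_minus C' S lam c s x + blk s x) ` cfg D s))"

definition lam_star :: "nat set set \<Rightarrow> nat set set \<Rightarrow> (nat set \<Rightarrow> nat set set)
    \<Rightarrow> (nat set \<Rightarrow> (nat \<Rightarrow> 'v) \<Rightarrow> real) \<Rightarrow> (nat \<Rightarrow> 'v set)
    \<Rightarrow> (nat set \<Rightarrow> nat set \<Rightarrow> (nat \<Rightarrow> 'v) \<Rightarrow> real) \<Rightarrow> nat set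
    \<Rightarrow> nat set \<Rightarrow> (nat \<Rightarrow> 'v) \<Rightarrow> real" where
  "lam_star C C' S \<theta> D lam c s xs =
     - theta_hat C \<theta> s xs + gamma C' S lam s xs - lam_minus C' S lam c s xs
     + (1 / real (card (S c - {c}))) *
       Max ((\<lambda>x. theta_hat C \<theta> c x + lam_in C' S lam c x
                 + (\<Sum>s'\<in>S c - {c}. theta_hat C \<theta> s' (restrict x s')
                       - gamma C' S lam s' (restrict x s') + lam_minus C' S lam c s' (restrict x s')))
            ` {x \<in> cfg D c. restrict x s = xs})"

end

theory Submission
  imports Defs
begin

lemma key:
  fixes X :: "'a set" and K :: "'k set" and Y :: "'k \<Rightarrow> 'b set" and r :: "'k \<Rightarrow> 'a \<Rightarrow> 'b"
    and A :: "'a \<Rightarrow> real" and B blk :: "'k \<Rightarrow> 'b \<Rightarrow> real"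
  assumes fX: "finite X" and neX: "X \<noteq> {}" and fK: "finite K" and neK: "K \<noteq> {}"
    and fY: "\<And>s. s \<in> K \<Longrightarrow> finite (Y s)"
    and rY: "\<And>s. s \<in> K \<Longrightarrow> r s ` X = Y s"
    and blk: "\<And>s y. s \<in> K \<Longrightarrow> y \<in> Y s \<Longrightarrow> blk s y = - B s y + 1 / real (card K) *
        Max ((\<lambda>x. A x + (\<Sum>s'\<in>K. B s' (r s' x))) ` {x \<in> X. r s x = y})"
  shows "Max ((\<lambda>x. A x - (\<Sum>s\<in>K. blk s (r s x))) ` X) + (\<Sum>s\<in>K. Max ((\<lambda>y. B s y + blk s y) ` Y s))
        = Max ((\<lambda>x. A x + (\<Sum>s\<in>K. B s (r s x))) ` X)"
proof -
  define F where "F x = A x + (\<Sum>s\<in>K. B s (r s x))" for x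
  define M where "M s y = Max (F ` {x \<in> X. r s x = y})" for s y
  define m where "m = real (card K)"
  have mpos: "m > 0" using fK neK by (simp add: m_def card_gt_0_iff)
  define MF where "MF = Max (F ` X)"
  obtain x0 where x0: "x0 \<in> X" "F x0 = MF"
    using fX neX unfolding MF_def by (metis (no_types, lifting) Max_in finite_imageI imageE image_is_empty)
  have FleMF: "F x \<le> MF" if "x \<in> X" for x using fX that unfolding MF_def by simp
  have blk': "blk s y = - B s y + M s y / m" if "s \<in> K" "y \<in> Y s" for s y
    using blk[OF that] unfolding M_def F_def m_def by simp
  have rin: "r s x \<in> Y s" if "s \<in> K" "x \<in> X" for s x
    by (subst rY[OF that(1), symmetric]) (rule imageI[OF that(2)])
  have Mle: "M s y \<le> MF" if "s \<in> K" "y \<in> Y s" for s y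
  proof -
    have ne: "{x \<in> X. r s x = y} \<noteq> {}" using that(2) unfolding rY[OF that(1), symmetric] by auto
    have "finite {x \<in> X. r s x = y}" using fX by simp
    then show ?thesis unfolding M_def using ne FleMF
      by (simp add: Max_le_iff)
  qed
  have Mge: "F x \<le> M s (r s x)" if "x \<in> X" for s x
    unfolding M_def using fX that by (intro Max_ge) auto
  have M0: "M s (r s x0) = MF" if "s \<in> K" for s
    using Mle[OF that rin[OF that x0(1)]] Mge[OF x0(1), of s] x0(2) by linarith
  have t1: "Max ((\<lambda>x. A x - (\<Sum>s\<in>K. blk s (r s x))) ` X) = 0"
  proof (rule Max_eqI)
    show "finite ((\<lambda>x. A x - (\<Sum>s\<in>K. blk s (r s x))) ` X)" using fX by simp
  next
    have eq: "A x - (\<Sum>s\<in>K. blk s (r s x)) = F x - (\<Sum>s\<in>K. M s (r s x)) / m" if "x \<in> X" for x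
    proof -
      have "(\<Sum>s\<in>K. blk s (r s x)) = (\<Sum>s\<in>K. - B s (r s x) + M s (r s x) / m)"
        using blk' rin that by (intro sum.cong) auto
      also have "\<dots> = - (\<Sum>s\<in>K. B s (r s x)) + (\<Sum>s\<in>K. M s (r s x)) / m"
        by (simp add: sum.distrib sum_divide_distrib sum_negf sum_subtractf)
      finally show ?thesis unfolding F_def by simp
    qed
    fix v assume "v \<in> (\<lambda>x. A x - (\<Sum>s\<in>K. blk s (r s x))) ` X"
    then obtain x where x: "x \<in> X" "v = A x - (\<Sum>s\<in>K. blk s (r s x))" by auto
    have "(\<Sum>s\<in>K. F x) \<le> (\<Sum>s\<in>K. M s (r s x))" using Mge[OF x(1)] by (intro sum_mono) auto
    hence "m * F x \<le> (\<Sum>s\<in>K. M s (r s x))" by (simp add: m_def)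
    hence "F x \<le> (\<Sum>s\<in>K. M s (r s x)) / m" using mpos by (simp add: field_simps)
    then show "v \<le> 0" using eq[OF x(1)] x(2) by simp
  next
    have "(\<Sum>s\<in>K. M s (r s x0)) = m * MF" using M0 by (simp add: m_def)
    have "(\<Sum>s\<in>K. blk s (r s x0)) = (\<Sum>s\<in>K. - B s (r s x0) + M s (r s x0) / m)"
      using blk' rin x0(1) by (intro sum.cong) auto
    hence "A x0 - (\<Sum>s\<in>K. blk s (r s x0)) = 0"
      using mpos x0 \<open>(\<Sum>s\<in>K. M s (r s x0)) = m * MF\<close> unfolding F_def
      by (simp add: sum.distrib sum_divide_distrib[symmetric] sum_negf sum_subtractf)
    then show "0 \<in> (\<lambda>x. A x - (\<Sum>s\<in>K. blk s (r s x))) ` X" using x0(1) by force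
  qed
  have t2: "Max ((\<lambda>y. B s y + blk s y) ` Y s) = MF / m" if s: "s \<in> K" for s
  proof (rule Max_eqI)
    show "finite ((\<lambda>y. B s y + blk s y) ` Y s)" using fY[OF s] by simp
  next
    fix v assume "v \<in> (\<lambda>y. B s y + blk s y) ` Y s"
    then obtain y where y: "y \<in> Y s" "v = B s y + blk s y" by auto
    then show "v \<le> MF / m" using blk'[OF s y(1)] Mle[OF s y(1)] mpos
      by (simp add: divide_right_mono)
  next
    have rx: "r s x0 \<in> Y s" using rin[OF s x0(1)] .
    moreover have "B s (r s x0) + blk s (r s x0) = MF / m" using blk'[OF s rx] M0[OF s] by simp
    ultimately show "MF / m \<in> (\<lambda>y. B s y + blk s y) ` Y s" by force
  qed
  have "(\<Sum>s\<in>K. Max ((\<lambda>y. B s y + blk s y) ` Y s)) = (\<Sum>s\<in>K. MF / m)" using t2 by simp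
  also have "\<dots> = MF" using mpos by (simp add: m_def)
  finally show ?thesis using t1 unfolding MF_def F_def by simp
qed

theorem proposition2:
  fixes n :: nat
    and D :: "nat \<Rightarrow> 'v set"
    and C C' :: "nat set set"
    and S :: "nat set \<Rightarrow> nat set set"
    and \<theta> :: "nat set \<Rightarrow> (nat \<Rightarrow> 'v) \<Rightarrow> real"
    and lam :: "nat set \<Rightarrow> nat set \<Rightarrow> (nat \<Rightarrow> 'v) \<Rightarrow> real"
    and c :: "nat set"
  assumes D_fin: "\<And>i. i \<in> {1..n} \<Longrightarrow> finite (D i)"
    and D_ne: "\<And>i. i \<in> {1..n} \<Longrightarrow> D i \<noteq> {}"
    and C_sub: "C \<subseteq> Pow {1..n}"
    and C'_sub: "C' \<subseteq> Pow {1..n}"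
    and S_sub: "\<And>c'. c' \<in> C' \<Longrightarrow> S c' \<subseteq> Pow c'"
    and C_cover: "C \<subseteq> C' \<union> (\<Union>c'\<in>C'. S c')"
    and c_in: "c \<in> C'"
    and S_ne: "S c - {c} \<noteq> {}"
  shows "g_block C C' S \<theta> D lam c (lam c) - g_block C C' S \<theta> D lam c (lam_star C C' S \<theta> D lam c)
           = Max (belief C C' S \<theta> lam c ` cfg D c)
             + (\<Sum>s\<in>S c - {c}. Max (belief C C' S \<theta> lam s ` cfg D s))
             - Max ((\<lambda>x. belief C C' S \<theta> lam c x
                        + (\<Sum>s\<in>S c - {c}. belief C C' S \<theta> lam s (restrict x s))) ` cfg D c)
       \<and> g_block C C' S \<theta> D lam c (lam c) - g_block C C' S \<theta> D lam c (lam_star C C' S \<theta> D lam c) \<ge> 0"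
proof -
  define K where "K = S c - {c}"
  define X where "X = cfg D c"
  define A where "A x = theta_hat C \<theta> c x + lam_in C' S lam c x" for x
  define B where "B s y = theta_hat C \<theta> s y - gamma C' S lam s y + lam_minus C' S lam c s y" for s y
  have c_sub: "c \<subseteq> {1..n}" using C'_sub c_in by auto
  have fc: "finite c" using c_sub finite_subset by blast
  have sK: "s \<subseteq> c" if "s \<in> K" for s using S_sub[OF c_in] that unfolding K_def by auto
  have fK: "finite K" unfolding K_def
    using S_sub[OF c_in] fc by (metis finite_Diff finite_Pow_iff finite_subset)
  have neK: "K \<noteq> {}" using S_ne unfolding K_def .
  have fcfg: "finite (cfg D t)" if "t \<subseteq> c" for t
    unfolding cfg_def by (intro finite_PiE finite_subset[OF that fc]) (use that c_sub D_fin in auto)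
  have necfg: "cfg D t \<noteq> {}" if "t \<subseteq> c" for t
    unfolding cfg_def using that c_sub D_ne by (auto simp: PiE_eq_empty_iff)
  obtain z where z: "z \<in> cfg D c" using necfg[of c] by auto
  have rY: "(\<lambda>x. restrict x s) ` X = cfg D s" if sKs: "s \<in> K" for s
  proof -
    have ss: "s \<subseteq> c" by (rule sK[OF sKs])
    show ?thesis
  proof
    show "(\<lambda>x. restrict x s) ` X \<subseteq> cfg D s"
    proof
      fix w assume "w \<in> (\<lambda>x. restrict x s) ` X"
      then obtain x where x: "x \<in> X" "w = restrict x s" by blast
      have "\<forall>i\<in>s. x i \<in> D i" using x(1) ss unfolding X_def cfg_def by (auto dest: PiE_mem)
      then show "w \<in> cfg D s" unfolding x(2) cfg_def by (simp add: restrict_PiE_iff)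
    qed
  next
    show "cfg D s \<subseteq> (\<lambda>x. restrict x s) ` X"
    proof
      fix y assume y: "y \<in> cfg D s"
      define x where "x = restrict (\<lambda>i. if i \<in> s then y i else z i) c"
      have yD: "\<forall>i\<in>s. y i \<in> D i" using y unfolding cfg_def by (auto dest: PiE_mem)
      have zD: "\<forall>i\<in>c. z i \<in> D i" using z unfolding cfg_def by (auto dest: PiE_mem)
      have "\<forall>i\<in>c. (if i \<in> s then y i else z i) \<in> D i" using yD zD by auto
      then have "x \<in> X" unfolding x_def X_def cfg_def by (simp only: restrict_PiE_iff)
      moreover have "restrict x s = y"
      proof
        fix i show "restrict x s i = y i"
        proof (cases "i \<in> s")
          case True then show ?thesis using ss unfolding x_def by auto
        next
          case False
          have y': "y \<in> PiE s D" using y unfolding cfg_def .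
          have "y i = undefined" using PiE_arb[OF y' False] .
          then show ?thesis using False by simp
        qed
      qed
      ultimately show "y \<in> (\<lambda>x. restrict x s) ` X" by (metis imageI)
    qed
  qed
  qed
  have finC': "finite C'" using C'_sub finite_subset by fastforce
  have bc: "belief C C' S \<theta> lam c = (\<lambda>x. A x - (\<Sum>s\<in>K. lam c s (restrict x s)))"
    by (rule ext) (simp add: belief_def A_def gamma_def c_in K_def)
  have bs: "belief C C' S \<theta> lam s = (\<lambda>y. B s y + lam c s y)" if "s \<in> K" for s
  proof
    fix y
    have "{c'\<in>C'. s \<in> S c' - {c'}} = insert c {c'\<in>C'. c' \<noteq> c \<and> s \<in> S c' - {c'}}"
      using that c_in unfolding K_def by auto
    hence "lam_in C' S lam s y = lam c s y + lam_minus C' S lam c s y"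
      unfolding lam_in_def lam_minus_def using finC' by (simp add: sum.insert)
    then show "belief C C' S \<theta> lam s y = B s y + lam c s y"
      by (simp add: belief_def B_def)
  qed
  have g1: "g_block C C' S \<theta> D lam c (lam c)
      = Max (belief C C' S \<theta> lam c ` cfg D c) + (\<Sum>s\<in>S c - {c}. Max (belief C C' S \<theta> lam s ` cfg D s))"
  proof -
    have e1: "(\<lambda>x. theta_hat C \<theta> c x - (\<Sum>s\<in>S c - {c}. lam c s (restrict x s)) + lam_in C' S lam c x)
        = belief C C' S \<theta> lam c" unfolding bc A_def K_def by (rule ext) simp
    have e2: "(\<Sum>s\<in>S c - {c}. Max ((\<lambda>x. theta_hat C \<theta> s x - gamma C' S lam s x
                                    + lam_minus C' S lam c s x + lam c s x) ` cfg D s))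
          = (\<Sum>s\<in>S c - {c}. Max (belief C C' S \<theta> lam s ` cfg D s))"
      by (rule sum.cong[OF refl]) (simp add: bs K_def B_def)
    show ?thesis unfolding g_block_def e1 e2 ..
  qed
  define F where "F x = A x + (\<Sum>s\<in>K. B s (restrict x s))" for x
  have F_eq: "(\<lambda>x. belief C C' S \<theta> lam c x + (\<Sum>s\<in>S c - {c}. belief C C' S \<theta> lam s (restrict x s))) = F"
  proof
    fix x
    have "(\<Sum>s\<in>K. belief C C' S \<theta> lam s (restrict x s)) = (\<Sum>s\<in>K. B s (restrict x s) + lam c s (restrict x s))"
      by (rule sum.cong[OF refl]) (simp add: bs)
    then show "belief C C' S \<theta> lam c x + (\<Sum>s\<in>S c - {c}. belief C C' S \<theta> lam s (restrict x s)) = F x"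
      unfolding F_def bc K_def[symmetric] by (simp add: sum.distrib)
  qed
  have g2: "g_block C C' S \<theta> D lam c (lam_star C C' S \<theta> D lam c) = Max (F ` X)"
  proof -
    have kk: "Max ((\<lambda>x. A x - (\<Sum>s\<in>K. lam_star C C' S \<theta> D lam c s (restrict x s))) ` X)
        + (\<Sum>s\<in>K. Max ((\<lambda>y. B s y + lam_star C C' S \<theta> D lam c s y) ` cfg D s)) = Max (F ` X)"
      unfolding F_def
    proof (rule key)
      show "finite X" unfolding X_def using fcfg by simp
      show "X \<noteq> {}" unfolding X_def using necfg by simp
      show "finite K" by (rule fK)
      show "K \<noteq> {}" by (rule neK)
      show "\<And>s. s \<in> K \<Longrightarrow> finite (cfg D s)" using fcfg sK by simp
      show "\<And>s. s \<in> K \<Longrightarrow> (\<lambda>x. restrict x s) ` X = cfg D s" by (rule rY)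
      show "\<And>s y. s \<in> K \<Longrightarrow> y \<in> cfg D s \<Longrightarrow> lam_star C C' S \<theta> D lam c s y = - B s y + 1 / real (card K) *
        Max ((\<lambda>x. A x + (\<Sum>s'\<in>K. B s' (restrict x s'))) ` {x \<in> X. restrict x s = y})"
        by (simp add: lam_star_def A_def B_def K_def X_def)
    qed
    have e1: "(\<lambda>x. theta_hat C \<theta> c x - (\<Sum>s\<in>S c - {c}. lam_star C C' S \<theta> D lam c s (restrict x s)) + lam_in C' S lam c x)
        = (\<lambda>x. A x - (\<Sum>s\<in>K. lam_star C C' S \<theta> D lam c s (restrict x s)))"
      unfolding A_def K_def by (rule ext) simp
    show ?thesis using kk unfolding g_block_def e1 by (simp add: B_def K_def X_def)
  qed
  have nn: "Max (F ` X) \<le> Max (belief C C' S \<theta> lam c ` cfg D c) + (\<Sum>s\<in>S c - {c}. Max (belief C C' S \<theta> lam s ` cfg D s))"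
  proof -
    have "F x \<le> Max (belief C C' S \<theta> lam c ` cfg D c) + (\<Sum>s\<in>S c - {c}. Max (belief C C' S \<theta> lam s ` cfg D s))"
      if x: "x \<in> X" for x
    proof -
      have "belief C C' S \<theta> lam c x \<le> Max (belief C C' S \<theta> lam c ` cfg D c)"
        using x fcfg[of c] unfolding X_def by simp
      moreover have "(\<Sum>s\<in>S c - {c}. belief C C' S \<theta> lam s (restrict x s)) \<le> (\<Sum>s\<in>S c - {c}. Max (belief C C' S \<theta> lam s ` cfg D s))"
      proof (rule sum_mono)
        fix s assume s: "s \<in> S c - {c}"
        have sK': "s \<in> K" using s unfolding K_def .
        have "restrict x s \<in> cfg D s" using rY[OF sK'] x by (metis imageI)
        then show "belief C C' S \<theta> lam s (restrict x s) \<le> Max (belief C C' S \<theta> lam s ` cfg D s)"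
          using fcfg[of s] sK[of s] s unfolding K_def by simp
      qed
      ultimately show ?thesis using fun_cong[OF F_eq, of x] by simp
    qed
    moreover have "finite (F ` X)" "F ` X \<noteq> {}" unfolding X_def using fcfg necfg by auto
    ultimately show ?thesis by (simp add: Max_le_iff)
  qed
  show ?thesis unfolding g1 g2 F_eq unfolding X_def using nn X_def by simp
qed

end
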